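(* Assume the setting below (in particular Assumption 1), with $\nu\in(0,1)$, $\mu>0$, $\beta>0$, and let $\theta^*$ be any minimizer over $\Theta$ of $\theta\mapsto\tilde{\mathsf R}(\theta)+\mu V(\theta)+\frac{\beta}{n}K(\theta)$. Then for every $\theta\in\Theta$, $$\tilde{\mathsf R}(\theta)-\tilde{\mathsf R}(\theta^* )\ge\mu\big(V(\theta^* )-V(\theta)\big)+\frac{\beta}{n}\big(K(\theta^* )-K(\theta)\big)+\Big(\frac{(1-\nu)C_\ell}{2}-\mu\Big)\|f_\theta-f_{\theta^*}\|_2^2 .$$
   Context: Setting: $(X,Y)$ random pair in $\mathcal X\times\mathbb R$ with $|Y|\le b$ a.s. ($b>0$); $f_1,\dots,f_M$ deterministic measurable functions with $\max_j|f_j(X)|\le b$ a.s.; $\Theta=\{\theta\in\mathbb R^M:\theta_j\ge0,\ \sum_j\theta_j=1\}$, $f_\theta=\sum_j\theta_jf_j$, $e_1,\dots,e_M$ the canonical basis of $\mathbb R^M$; $\|f\|_2=\sqrt{\mathbb E f(X)^2}$; prior $\pi$ with $\pi_j>0$, $\sum_j\pi_j=1$; $n\ge1$ an integer. Assumption 1: for all $f,g\in[-b,b]$, $|\ell(Y,f)-\ell(Y,g)|\le C_b|f-g|$ a.s.; and a.s. $\ell(Y,\cdot)$ is strongly convex on $[-b,b]$ with modulus $C_\ell>0$, i.e. $\ell(Y,\alpha a+(1-\alpha)a')\le\alpha\ell(Y,a)+(1-\alpha)\ell(Y,a')-\frac{C_\ell}2\alpha(1-\alpha)(a-a')^2$ for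 $a,a'\in[-b,b]$, $\alpha\in(0,1)$. Notation: $\ell_\theta(y,x)=\ell(y,f_\theta(x))$, $\mathsf R(\theta)=\mathbb E\,\ell(Y,f_\theta(X))$; $\tilde\ell_\theta=(1-\nu)\ell_\theta+\nu\sum_j\theta_j\ell_{e_j}$ and $\tilde{\mathsf R}(\theta)=\mathbb E\,\tilde\ell_\theta(Y,X)=(1-\nu)\mathsf R(\theta)+\nu\sum_j\theta_j\mathsf R(e_j)$; $K(\theta)=\sum_j\theta_j\log(1/\pi_j)$; $V(\theta)=\sum_j\theta_j\|f_j-f_\theta\|_2^2$. *)

theory Defs
  imports "HOL-Probability.Probability"
begin

definition Simplex :: "nat \<Rightarrow> (nat \<Rightarrow> real) set" where
  "Simplex M = {\<theta>. (\<forall>j<M. 0 \<le> \<theta> j) \<and> (\<Sum>j<M. \<theta> j) = 1}"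

definition basis_vec :: "nat \<Rightarrow> nat \<Rightarrow> real" where
  "basis_vec j = (\<lambda>i. if i = j then 1 else 0)"

definition agg :: "(nat \<Rightarrow> 'x \<Rightarrow> real) \<Rightarrow> nat \<Rightarrow> (nat \<Rightarrow> real) \<Rightarrow> 'x \<Rightarrow> real" where
  "agg f M \<theta> x = (\<Sum>j<M. \<theta> j * f j x)"

definition risk :: "'o measure \<Rightarrow> ('o \<Rightarrow> 'x) \<Rightarrow> ('o \<Rightarrow> real) \<Rightarrow> (real \<Rightarrow> real \<Rightarrow> real)
    \<Rightarrow> (nat \<Rightarrow> 'x \<Rightarrow> real) \<Rightarrow> nat \<Rightarrow> (nat \<Rightarrow> real) \<Rightarrow> real" where
  "risk P X Y ell f M \<theta> = (\<integral>\<omega>. ell (Y \<omega>) (agg f M \<theta> (X \<omega>)) \<partial>P)"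

definition risk_tilde :: "'o measure \<Rightarrow> ('o \<Rightarrow> 'x) \<Rightarrow> ('o \<Rightarrow> real) \<Rightarrow> (real \<Rightarrow> real \<Rightarrow> real)
    \<Rightarrow> (nat \<Rightarrow> 'x \<Rightarrow> real) \<Rightarrow> nat \<Rightarrow> real \<Rightarrow> (nat \<Rightarrow> real) \<Rightarrow> real" where
  "risk_tilde P X Y ell f M \<nu> \<theta> =
     (1 - \<nu>) * risk P X Y ell f M \<theta> + \<nu> * (\<Sum>j<M. \<theta> j * risk P X Y ell f M (basis_vec j))"

definition Kdiv :: "(nat \<Rightarrow> real) \<Rightarrow> nat \<Rightarrow> (nat \<Rightarrow> real) \<Rightarrow> real" where
  "Kdiv \<pi> M \<theta> = (\<Sum>j<M. \<theta> j * ln (1 / \<pi> j))"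

definition sqnorm :: "'o measure \<Rightarrow> ('o \<Rightarrow> 'x) \<Rightarrow> ('x \<Rightarrow> real) \<Rightarrow> real" where
  "sqnorm P X g = (\<integral>\<omega>. (g (X \<omega>))\<^sup>2 \<partial>P)"

definition Vvar :: "'o measure \<Rightarrow> ('o \<Rightarrow> 'x) \<Rightarrow> (nat \<Rightarrow> 'x \<Rightarrow> real) \<Rightarrow> nat \<Rightarrow> (nat \<Rightarrow> real) \<Rightarrow> real" where
  "Vvar P X f M \<theta> = (\<Sum>j<M. \<theta> j * sqnorm P X (\<lambda>x. f j x - agg f M \<theta> x))"

end

theory Submission imports Defs begin

lemma quad_sum:
  fixes t a :: "nat \<Rightarrow> real"
  assumes "(\<Sum>j<M. t j) = 1"
  shows "(\<Sum>j<M. t j * (a j - (\<Sum>i<M. t i * a i))\<^sup>2) = (\<Sum>j<M. t j * (a j)\<^sup>2) - (\<Sum>i<M. t i * a i)\<^sup>2"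
proof -
  define c where "c = (\<Sum>i<M. t i * a i)"
  have "(\<Sum>j<M. t j * (a j - c)\<^sup>2) = (\<Sum>j<M. t j * (a j)\<^sup>2 - 2 * c * (t j * a j) + c\<^sup>2 * t j)"
    by (rule sum.cong) (auto simp: power2_eq_square algebra_simps)
  also have "\<dots> = (\<Sum>j<M. t j * (a j)\<^sup>2) - 2 * c * c + c\<^sup>2 * 1"
    by (simp add: sum.distrib sum_subtractf sum_distrib_left[symmetric] c_def assms)
  finally show ?thesis by (simp add: c_def power2_eq_square)
qed

lemma limit_arg:
  fixes A B :: real
  assumes "\<And>\<alpha>. \<alpha> \<in> {0<..<1} \<Longrightarrow> A \<ge> (1 - \<alpha>) * B"
  shows "A \<ge> B"
proof (rule ccontr)
  assume "\<not> A \<ge> B"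
  hence AB: "A < B" by simp
  have h: "A \<ge> B / 2" using assms[of "1/2"] by simp
  hence Bp: "B > 0" using AB by linarith
  define \<alpha> where "\<alpha> = (B - A) / (2 * B)"
  have a0: "\<alpha> > 0" using AB Bp by (simp add: \<alpha>_def)
  have a1: "\<alpha> < 1" using AB Bp h by (simp add: \<alpha>_def field_simps)
  have "(1 - \<alpha>) * B = (A + B) / 2" using Bp by (simp add: \<alpha>_def field_simps)
  with assms[of \<alpha>] a0 a1 AB show False by simp
qed

lemma meas_ell:
  fixes ell :: "real \<Rightarrow> real \<Rightarrow> real" and Y g :: "'o \<Rightarrow> real"
  assumes "(\<lambda>(y, a). ell y a) \<in> borel_measurable borel"
    and "Y \<in> borel_measurable P" and "g \<in> borel_measurable P"
  shows "(\<lambda>\<omega>. ell (Y \<omega>) (g \<omega>) :: real) \<in> borel_measurable P"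
proof -
  have "(\<lambda>(y, a). ell y a) \<in> borel_measurable (borel \<Otimes>\<^sub>M borel)"
    using assms(1) unfolding borel_prod .
  thus ?thesis using assms(2,3) by (rule measurable_Pair_compose_split)
qed

lemma lin_sum:
  fixes t s r :: "nat \<Rightarrow> real"
  shows "(\<Sum>j<M. (\<alpha> * t j + (1 - \<alpha>) * s j) * r j) = \<alpha> * (\<Sum>j<M. t j * r j) + (1 - \<alpha>) * (\<Sum>j<M. s j * r j)"
proof -
  have "(\<Sum>j<M. (\<alpha> * t j + (1 - \<alpha>) * s j) * r j) = (\<Sum>j<M. \<alpha> * (t j * r j) + (1 - \<alpha>) * (s j * r j))"
    by (rule sum.cong) (simp_all add: algebra_simps)
  thus ?thesis by (simp add: sum.distrib sum_distrib_left)
qed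

lemma sq_bound:
  fixes g :: "'o \<Rightarrow> real"
  assumes "AE \<omega> in P. \<bar>g \<omega>\<bar> \<le> B"
  shows "AE \<omega> in P. norm ((g \<omega>)\<^sup>2) \<le> B\<^sup>2"
  using assms
proof eventually_elim
  case (elim \<omega>)
  have "\<bar>g \<omega>\<bar>\<^sup>2 \<le> B\<^sup>2" by (rule power_mono[OF elim]) simp
  thus ?case by simp
qed

theorem proposition3:
  fixes P :: "'o measure" and Mx :: "'x measure"
    and X :: "'o \<Rightarrow> 'x" and Y :: "'o \<Rightarrow> real"
    and f :: "nat \<Rightarrow> 'x \<Rightarrow> real" and M :: nat
    and ell :: "real \<Rightarrow> real \<Rightarrow> real"
    and \<pi> :: "nat \<Rightarrow> real" and b C_b C_ell \<nu> \<mu> \<beta> :: real and n :: nat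
    and \<theta>star :: "nat \<Rightarrow> real"
  assumes P: "prob_space P"
    and X_meas: "X \<in> measurable P Mx"
    and Y_meas: "Y \<in> borel_measurable P"
    and f_meas: "\<And>j. j < M \<Longrightarrow> f j \<in> borel_measurable Mx"
    and ell_meas: "(\<lambda>(y, a). ell y a) \<in> borel_measurable borel"
    and b_pos: "b > 0"
    and Y_bdd: "AE \<omega> in P. \<bar>Y \<omega>\<bar> \<le> b"
    and f_bdd: "AE \<omega> in P. \<forall>j<M. \<bar>f j (X \<omega>)\<bar> \<le> b"
    and risk_int: "\<And>j. j < M \<Longrightarrow> integrable P (\<lambda>\<omega>. ell (Y \<omega>) (f j (X \<omega>)))"
    and pi_pos: "\<And>j. j < M \<Longrightarrow> \<pi> j > 0"
    and pi_sum: "(\<Sum>j<M. \<pi> j) = 1"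
    and lipschitz: "AE \<omega> in P. \<forall>a\<in>{-b..b}. \<forall>a'\<in>{-b..b}.
                      \<bar>ell (Y \<omega>) a - ell (Y \<omega>) a'\<bar> \<le> C_b * \<bar>a - a'\<bar>"
    and C_ell_pos: "C_ell > 0"
    and strong_convex: "AE \<omega> in P. \<forall>a\<in>{-b..b}. \<forall>a'\<in>{-b..b}. \<forall>\<alpha>\<in>{0<..<1}.
          ell (Y \<omega>) (\<alpha> * a + (1 - \<alpha>) * a')
            \<le> \<alpha> * ell (Y \<omega>) a + (1 - \<alpha>) * ell (Y \<omega>) a' - C_ell / 2 * \<alpha> * (1 - \<alpha>) * (a - a')\<^sup>2"
    and n_pos: "n \<ge> 1"
    and nu: "\<nu> \<in> {0<..<1}" and mu_pos: "\<mu> > 0" and beta_pos: "\<beta> > 0"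
    and star_in: "\<theta>star \<in> Simplex M"
    and star_min: "\<forall>\<theta>\<in>Simplex M.
          risk_tilde P X Y ell f M \<nu> \<theta>star + \<mu> * Vvar P X f M \<theta>star + \<beta> / real n * Kdiv \<pi> M \<theta>star
          \<le> risk_tilde P X Y ell f M \<nu> \<theta> + \<mu> * Vvar P X f M \<theta> + \<beta> / real n * Kdiv \<pi> M \<theta>"
  shows "\<forall>\<theta>\<in>Simplex M.
           risk_tilde P X Y ell f M \<nu> \<theta> - risk_tilde P X Y ell f M \<nu> \<theta>star
           \<ge> \<mu> * (Vvar P X f M \<theta>star - Vvar P X f M \<theta>)
             + \<beta> / real n * (Kdiv \<pi> M \<theta>star - Kdiv \<pi> M \<theta>)
             + ((1 - \<nu>) * C_ell / 2 - \<mu>) * sqnorm P X (\<lambda>x. agg f M \<theta> x - agg f M \<theta>star x)"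
proof (intro ballI)
  fix \<theta> assume th: "\<theta> \<in> Simplex M"
  interpret prob_space P by (rule P)
  have M0: "M > 0"
  proof (rule ccontr)
    assume "\<not> M > 0" hence "M = 0" by simp
    with star_in show False by (simp add: Simplex_def)
  qed
  define F where "F t \<omega> = agg f M t (X \<omega>)" for t \<omega>
  have Fmeas: "F t \<in> borel_measurable P" for t
  proof -
    have "(\<lambda>\<omega>. \<Sum>j<M. t j * f j (X \<omega>)) \<in> borel_measurable P"
      by (intro borel_measurable_sum borel_measurable_times borel_measurable_const
          measurable_compose[OF X_meas f_meas]) auto
    thus ?thesis unfolding F_def agg_def by (simp add: fun_eq_iff)
  qed
  have fjmeas: "j < M \<Longrightarrow> (\<lambda>\<omega>. f j (X \<omega>)) \<in> borel_measurable P" for j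
    by (rule measurable_compose[OF X_meas f_meas])
  have Fbd: "AE \<omega> in P. \<bar>F t \<omega>\<bar> \<le> b" if t: "t \<in> Simplex M" for t
    using f_bdd
  proof eventually_elim
    case (elim \<omega>)
    have "\<bar>F t \<omega>\<bar> \<le> (\<Sum>j<M. \<bar>t j * f j (X \<omega>)\<bar>)"
      unfolding F_def agg_def by (rule sum_abs)
    also have "\<dots> \<le> (\<Sum>j<M. t j * b)"
    proof (rule sum_mono)
      fix j assume "j \<in> {..<M}"
      hence "0 \<le> t j" "\<bar>f j (X \<omega>)\<bar> \<le> b" using t elim by (auto simp: Simplex_def)
      thus "\<bar>t j * f j (X \<omega>)\<bar> \<le> t j * b" by (simp add: abs_mult mult_left_mono)
    qed
    also have "\<dots> = b" using t by (simp add: Simplex_def sum_distrib_right[symmetric])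
    finally show ?case .
  qed
  have Lint: "integrable P (\<lambda>\<omega>. ell (Y \<omega>) (F t \<omega>))" if t: "t \<in> Simplex M" for t
  proof (rule Bochner_Integration.integrable_bound[where f="\<lambda>\<omega>. \<bar>ell (Y \<omega>) (f 0 (X \<omega>))\<bar> + \<bar>C_b\<bar> * (2 * b)"])
    show "integrable P (\<lambda>\<omega>. \<bar>ell (Y \<omega>) (f 0 (X \<omega>))\<bar> + \<bar>C_b\<bar> * (2 * b))"
      using risk_int[OF M0] by auto
    show "(\<lambda>\<omega>. ell (Y \<omega>) (F t \<omega>)) \<in> borel_measurable P"
      by (rule meas_ell[OF ell_meas Y_meas Fmeas])
    show "AE \<omega> in P. norm (ell (Y \<omega>) (F t \<omega>)) \<le> norm (\<bar>ell (Y \<omega>) (f 0 (X \<omega>))\<bar> + \<bar>C_b\<bar> * (2 * b))"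
      using Fbd[OF t] f_bdd lipschitz
    proof eventually_elim
      case (elim \<omega>)
      have f0: "\<bar>f 0 (X \<omega>)\<bar> \<le> b" using elim M0 by auto
      have "\<bar>ell (Y \<omega>) (F t \<omega>) - ell (Y \<omega>) (f 0 (X \<omega>))\<bar> \<le> C_b * \<bar>F t \<omega> - f 0 (X \<omega>)\<bar>"
        using elim(3) elim(1) f0 by (simp add: abs_le_iff)
      also have "\<dots> \<le> \<bar>C_b\<bar> * \<bar>F t \<omega> - f 0 (X \<omega>)\<bar>" by (simp add: mult_right_mono)
      also have "\<dots> \<le> \<bar>C_b\<bar> * (2 * b)" using elim f0 by (intro mult_left_mono) auto
      finally have "\<bar>ell (Y \<omega>) (F t \<omega>) - ell (Y \<omega>) (f 0 (X \<omega>))\<bar> \<le> \<bar>C_b\<bar> * (2 * b)" .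
      moreover have "0 \<le> \<bar>C_b\<bar> * (2 * b)" using b_pos by simp
      ultimately show ?case by simp
    qed
  qed
  have sqint: "integrable P (\<lambda>\<omega>. (g \<omega>)\<^sup>2)"
    if "g \<in> borel_measurable P" "AE \<omega> in P. \<bar>g \<omega>\<bar> \<le> B" for g :: "'o \<Rightarrow> real" and B
    by (rule integrable_const_bound[OF sq_bound[OF that(2)]]) (use that(1) in simp)
  define R where "R t = risk P X Y ell f M t" for t
  have R_eq: "R t = (\<integral>\<omega>. ell (Y \<omega>) (F t \<omega>) \<partial>P)" for t
    unfolding R_def risk_def F_def ..
  define S where "S t = (\<Sum>j<M. t j * risk P X Y ell f M (basis_vec j))" for t
  define W where "W t \<omega> = (\<Sum>j<M. t j * (f j (X \<omega>) - F t \<omega>)\<^sup>2)" for t \<omega>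
  have sqj: "integrable P (\<lambda>\<omega>. (f j (X \<omega>) - F t \<omega>)\<^sup>2)" if t: "t \<in> Simplex M" and j: "j < M" for t j
  proof (rule sqint)
    show "(\<lambda>\<omega>. f j (X \<omega>) - F t \<omega>) \<in> borel_measurable P"
      using fjmeas[of j] j Fmeas[of t] by auto
    show "AE \<omega> in P. \<bar>f j (X \<omega>) - F t \<omega>\<bar> \<le> 2 * b"
      using Fbd[OF t] f_bdd by eventually_elim (use j in auto)
  qed
  have Wint: "integrable P (W t)" if t: "t \<in> Simplex M" for t
    unfolding W_def using sqj[OF t] by auto
  have V_eq: "Vvar P X f M t = (\<integral>\<omega>. W t \<omega> \<partial>P)" if t: "t \<in> Simplex M" for t
  proof -
    have "Vvar P X f M t = (\<Sum>j<M. (\<integral>\<omega>. t j * (f j (X \<omega>) - F t \<omega>)\<^sup>2 \<partial>P))"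
      unfolding Vvar_def sqnorm_def F_def by simp
    also have "\<dots> = (\<integral>\<omega>. W t \<omega> \<partial>P)"
      unfolding W_def
      by (subst Bochner_Integration.integral_sum) (use sqj[OF t] in auto)
    finally show ?thesis .
  qed
  have W_alt: "W t \<omega> = (\<Sum>j<M. t j * (f j (X \<omega>))\<^sup>2) - (F t \<omega>)\<^sup>2" if t: "t \<in> Simplex M" for t \<omega>
  proof -
    have "(\<Sum>j<M. t j) = 1" using t by (simp add: Simplex_def)
    from quad_sum[OF this, of "\<lambda>j. f j (X \<omega>)"] show ?thesis
      unfolding W_def F_def agg_def .
  qed
  define D where "D = sqnorm P X (\<lambda>x. agg f M \<theta> x - agg f M \<theta>star x)"
  have D_eq: "D = (\<integral>\<omega>. (F \<theta> \<omega> - F \<theta>star \<omega>)\<^sup>2 \<partial>P)"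
    unfolding D_def sqnorm_def F_def ..
  have Dint: "integrable P (\<lambda>\<omega>. (F \<theta> \<omega> - F \<theta>star \<omega>)\<^sup>2)"
  proof (rule sqint)
    show "(\<lambda>\<omega>. F \<theta> \<omega> - F \<theta>star \<omega>) \<in> borel_measurable P" using Fmeas by auto
    show "AE \<omega> in P. \<bar>F \<theta> \<omega> - F \<theta>star \<omega>\<bar> \<le> 2 * b"
      using Fbd[OF th] Fbd[OF star_in] by eventually_elim auto
  qed
  define K where "K t = Kdiv \<pi> M t" for t
  define V where "V t = Vvar P X f M t" for t
  define bn where "bn = \<beta> / real n"
  define G where "G t = ((1 - \<nu>) * R t + \<nu> * S t) + \<mu> * V t + bn * K t" for t
  define c where "c = (1 - \<nu>) * C_ell / 2 - \<mu>"
  have RT: "risk_tilde P X Y ell f M \<nu> t = (1 - \<nu>) * R t + \<nu> * S t" for t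
    unfolding risk_tilde_def R_def S_def ..
  have Gstar: "G \<theta>star \<le> G t" if "t \<in> Simplex M" for t
    using star_min that unfolding G_def RT[symmetric] V_def K_def bn_def by blast
  have main: "G \<theta> - G \<theta>star \<ge> (1 - \<alpha>) * (c * D)" if a: "\<alpha> \<in> {0<..<1}" for \<alpha>
  proof -
    define ta where "ta = (\<lambda>j. \<alpha> * \<theta> j + (1 - \<alpha>) * \<theta>star j)"
    have ta_in: "ta \<in> Simplex M"
    proof -
      have "\<forall>j<M. 0 \<le> ta j" using th star_in a unfolding ta_def Simplex_def by auto
      moreover have "(\<Sum>j<M. ta j) = 1"
        using lin_sum[where \<alpha>=\<alpha> and t=\<theta> and s=\<theta>star and M=M and r="\<lambda>_. 1"] th star_in unfolding ta_def Simplex_def by simp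
      ultimately show ?thesis unfolding Simplex_def by simp
    qed
    have Fta: "F ta \<omega> = \<alpha> * F \<theta> \<omega> + (1 - \<alpha>) * F \<theta>star \<omega>" for \<omega>
      unfolding F_def agg_def ta_def by (rule lin_sum)
    have S_ta: "S ta = \<alpha> * S \<theta> + (1 - \<alpha>) * S \<theta>star"
      unfolding S_def ta_def by (rule lin_sum)
    have K_ta: "K ta = \<alpha> * K \<theta> + (1 - \<alpha>) * K \<theta>star"
      unfolding K_def Kdiv_def ta_def by (rule lin_sum)
    have W_ta: "W ta \<omega> = \<alpha> * W \<theta> \<omega> + (1 - \<alpha>) * W \<theta>star \<omega> + \<alpha> * (1 - \<alpha>) * (F \<theta> \<omega> - F \<theta>star \<omega>)\<^sup>2" for \<omega>
    proof -
      have s: "(\<Sum>j<M. ta j * (f j (X \<omega>))\<^sup>2) = \<alpha> * (\<Sum>j<M. \<theta> j * (f j (X \<omega>))\<^sup>2) + (1 - \<alpha>) * (\<Sum>j<M. \<theta>star j * (f j (X \<omega>))\<^sup>2)"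
        unfolding ta_def by (rule lin_sum)
      show ?thesis unfolding W_alt[OF ta_in] W_alt[OF th] W_alt[OF star_in] s Fta
        by (simp add: power2_eq_square algebra_simps)
    qed
    have V_ta: "V ta = \<alpha> * V \<theta> + (1 - \<alpha>) * V \<theta>star + \<alpha> * (1 - \<alpha>) * D"
    proof -
      have "V ta = (\<integral>\<omega>. \<alpha> * W \<theta> \<omega> + (1 - \<alpha>) * W \<theta>star \<omega> + \<alpha> * (1 - \<alpha>) * (F \<theta> \<omega> - F \<theta>star \<omega>)\<^sup>2 \<partial>P)"
        unfolding V_def V_eq[OF ta_in] W_ta ..
      also have "\<dots> = \<alpha> * V \<theta> + (1 - \<alpha>) * V \<theta>star + \<alpha> * (1 - \<alpha>) * D"
        unfolding V_def V_eq[OF th] V_eq[OF star_in] D_eq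
        using Wint[OF th] Wint[OF star_in] Dint by simp
      finally show ?thesis .
    qed
    have R_ta: "R ta \<le> \<alpha> * R \<theta> + (1 - \<alpha>) * R \<theta>star - C_ell / 2 * \<alpha> * (1 - \<alpha>) * D"
    proof -
      have "R ta \<le> (\<integral>\<omega>. \<alpha> * ell (Y \<omega>) (F \<theta> \<omega>) + (1 - \<alpha>) * ell (Y \<omega>) (F \<theta>star \<omega>)
                   - C_ell / 2 * \<alpha> * (1 - \<alpha>) * (F \<theta> \<omega> - F \<theta>star \<omega>)\<^sup>2 \<partial>P)"
        unfolding R_eq
      proof (rule integral_mono_AE)
        show "integrable P (\<lambda>\<omega>. ell (Y \<omega>) (F ta \<omega>))" by (rule Lint[OF ta_in])
        show "integrable P (\<lambda>\<omega>. \<alpha> * ell (Y \<omega>) (F \<theta> \<omega>) + (1 - \<alpha>) * ell (Y \<omega>) (F \<theta>star \<omega>)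
                   - C_ell / 2 * \<alpha> * (1 - \<alpha>) * (F \<theta> \<omega> - F \<theta>star \<omega>)\<^sup>2)"
          using Lint[OF th] Lint[OF star_in] Dint by auto
        show "AE \<omega> in P. ell (Y \<omega>) (F ta \<omega>) \<le> \<alpha> * ell (Y \<omega>) (F \<theta> \<omega>) + (1 - \<alpha>) * ell (Y \<omega>) (F \<theta>star \<omega>)
                   - C_ell / 2 * \<alpha> * (1 - \<alpha>) * (F \<theta> \<omega> - F \<theta>star \<omega>)\<^sup>2"
          using Fbd[OF th] Fbd[OF star_in] strong_convex
        proof eventually_elim
          case (elim \<omega>)
          have "F \<theta> \<omega> \<in> {-b..b}" "F \<theta>star \<omega> \<in> {-b..b}" using elim(1,2) by (auto simp: abs_le_iff)
          with elim(3) a have "ell (Y \<omega>) (\<alpha> * F \<theta> \<omega> + (1 - \<alpha>) * F \<theta>star \<omega>)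
            \<le> \<alpha> * ell (Y \<omega>) (F \<theta> \<omega>) + (1 - \<alpha>) * ell (Y \<omega>) (F \<theta>star \<omega>) - C_ell / 2 * \<alpha> * (1 - \<alpha>) * (F \<theta> \<omega> - F \<theta>star \<omega>)\<^sup>2"
            by blast
          thus ?case unfolding Fta .
        qed
      qed
      also have "\<dots> = \<alpha> * R \<theta> + (1 - \<alpha>) * R \<theta>star - C_ell / 2 * \<alpha> * (1 - \<alpha>) * D"
        unfolding R_eq D_eq using Lint[OF th] Lint[OF star_in] Dint by simp
      finally show ?thesis .
    qed
    have nu1: "0 \<le> 1 - \<nu>" using nu by simp
    have R_ta': "(1 - \<nu>) * R ta \<le> (1 - \<nu>) * (\<alpha> * R \<theta> + (1 - \<alpha>) * R \<theta>star - C_ell / 2 * \<alpha> * (1 - \<alpha>) * D)"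
      by (rule mult_left_mono[OF R_ta nu1])
    have idt: "\<alpha> * G \<theta> + (1 - \<alpha>) * G \<theta>star - \<alpha> * (1 - \<alpha>) * c * D - G ta
        = (1 - \<nu>) * (\<alpha> * R \<theta> + (1 - \<alpha>) * R \<theta>star - C_ell / 2 * \<alpha> * (1 - \<alpha>) * D) - (1 - \<nu>) * R ta"
      unfolding G_def S_ta K_ta V_ta c_def by (simp add: algebra_simps)
    have "G \<theta>star \<le> G ta" by (rule Gstar[OF ta_in])
    hence "\<alpha> * ((1 - \<alpha>) * (c * D)) \<le> \<alpha> * (G \<theta> - G \<theta>star)"
      using idt R_ta' by (simp add: algebra_simps)
    thus ?thesis using a by simp
  qed
  have "G \<theta> - G \<theta>star \<ge> c * D" by (rule limit_arg) (rule main)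
  thus "risk_tilde P X Y ell f M \<nu> \<theta> - risk_tilde P X Y ell f M \<nu> \<theta>star
           \<ge> \<mu> * (Vvar P X f M \<theta>star - Vvar P X f M \<theta>)
             + \<beta> / real n * (Kdiv \<pi> M \<theta>star - Kdiv \<pi> M \<theta>)
             + ((1 - \<nu>) * C_ell / 2 - \<mu>) * sqnorm P X (\<lambda>x. agg f M \<theta> x - agg f M \<theta>star x)"
    unfolding RT G_def c_def D_def V_def K_def bn_def by (simp add: algebra_simps)
qed

end
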